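(* In the setting of the blurring mean-shift iteration with $f$ PDD and fixed positive weights, let $r_M=\max_{i,j}\|x_i-x_j\|$ and write $f(u)=\varphi(\|u\|)$. If $\varphi(r_M)>0$, then there exists $c\in\mathbb{R}^p$ such that $\lim_{t\to\infty}x_i^{(t)}=c$ for all $i=1,\dots,N$.
   Context: Setting: $x_1,\dots,x_N\in\mathbb{R}^p$, fixed weights $w_1,\dots,w_N>0$, and $f:\mathbb{R}^p\to[0,1]$ PDD, meaning: $f(u)=1$ iff $u=0$; $f(u)=\varphi(\|u\|)$ for some $\varphi:[0,\infty)\to[0,1]$; $\varphi$ is decreasing (non-increasing). The blurring mean-shift iteration is $x_i^{(0)}=x_i$ and $x_i^{(t+1)}=\frac{\sum_{j=1}^N f(x_i^{(t)}-x_j^{(t)})w_jx_j^{(t)}}{\sum_{j=1}^N f(x_i^{(t)}-x_j^{(t)})w_j}$. *)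

theory Defs
  imports "HOL-Analysis.Analysis"
begin

definition PDD :: "('a::real_normed_vector \<Rightarrow> real) \<Rightarrow> (real \<Rightarrow> real) \<Rightarrow> bool" where
  "PDD f \<phi> \<longleftrightarrow>
     (\<forall>u. f u = \<phi> (norm u)) \<and>
     (\<forall>u. f u = 1 \<longleftrightarrow> u = 0) \<and>
     (\<forall>r\<ge>0. 0 \<le> \<phi> r \<and> \<phi> r \<le> 1) \<and>
     (\<forall>a b. 0 \<le> a \<longrightarrow> a \<le> b \<longrightarrow> \<phi> b \<le> \<phi> a)"

fun bms :: "('a::real_normed_vector \<Rightarrow> real) \<Rightarrow> (nat \<Rightarrow> real) \<Rightarrow> nat \<Rightarrow> (nat \<Rightarrow> 'a) \<Rightarrow> nat \<Rightarrow> nat \<Rightarrow> 'a" where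
  "bms f w N x 0 = x"
| "bms f w N x (Suc t) = (\<lambda>i.
     (\<Sum>j<N. (f (bms f w N x t i - bms f w N x t j) * w j) *\<^sub>R bms f w N x t j) /\<^sub>R
     (\<Sum>j<N. f (bms f w N x t i - bms f w N x t j) * w j))"

end

theory Submission
  imports Defs
begin

lemma conv_dist:
  fixes y :: "nat \<Rightarrow> 'a::real_normed_vector"
  assumes a0: "\<And>i j. i<N \<Longrightarrow> j<N \<Longrightarrow> a i j \<ge> 0"
    and a1: "\<And>i. i<N \<Longrightarrow> (\<Sum>j<N. a i j) = 1"
    and R: "\<And>j l. j<N \<Longrightarrow> l<N \<Longrightarrow> norm (y j - y l) \<le> R"
    and i: "i<N" and k: "k<N"
  shows "norm ((\<Sum>j<N. a i j *\<^sub>R y j) - (\<Sum>l<N. a k l *\<^sub>R y l)) \<le> R"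
proof -
  have e1: "(\<Sum>j<N. a i j *\<^sub>R y j) = (\<Sum>j<N. \<Sum>l<N. (a i j * a k l) *\<^sub>R y j)"
  proof (rule sum.cong[OF refl])
    fix j
    have "(\<Sum>l<N. (a i j * a k l) *\<^sub>R y j) = (\<Sum>l<N. a i j * a k l) *\<^sub>R y j"
      by (simp add: scaleR_sum_left)
    also have "\<dots> = a i j *\<^sub>R y j" by (simp add: sum_distrib_left[symmetric] a1[OF k])
    finally show "a i j *\<^sub>R y j = (\<Sum>l<N. (a i j * a k l) *\<^sub>R y j)" by simp
  qed
  have e2: "(\<Sum>l<N. a k l *\<^sub>R y l) = (\<Sum>j<N. \<Sum>l<N. (a i j * a k l) *\<^sub>R y l)"
  proof -
    have "(\<Sum>j<N. \<Sum>l<N. (a i j * a k l) *\<^sub>R y l) = (\<Sum>l<N. \<Sum>j<N. (a i j * a k l) *\<^sub>R y l)"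
      by (rule sum.swap)
    also have "\<dots> = (\<Sum>l<N. a k l *\<^sub>R y l)"
    proof (rule sum.cong[OF refl])
      fix l
      have "(\<Sum>j<N. (a i j * a k l) *\<^sub>R y l) = (\<Sum>j<N. a i j * a k l) *\<^sub>R y l"
        by (simp add: scaleR_sum_left)
      also have "\<dots> = a k l *\<^sub>R y l" by (simp add: sum_distrib_right[symmetric] a1[OF i])
      finally show "(\<Sum>j<N. (a i j * a k l) *\<^sub>R y l) = a k l *\<^sub>R y l" .
    qed
    finally show ?thesis by simp
  qed
  have "(\<Sum>j<N. a i j *\<^sub>R y j) - (\<Sum>l<N. a k l *\<^sub>R y l)
        = (\<Sum>j<N. \<Sum>l<N. (a i j * a k l) *\<^sub>R (y j - y l))"
    unfolding e1 e2 by (simp add: sum_subtractf scaleR_diff_right)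
  also have "norm \<dots> \<le> (\<Sum>j<N. \<Sum>l<N. norm ((a i j * a k l) *\<^sub>R (y j - y l)))"
    by (rule order_trans[OF norm_sum sum_mono[OF norm_sum]])
  also have "\<dots> \<le> (\<Sum>j<N. \<Sum>l<N. (a i j * a k l) * R)"
  proof (intro sum_mono)
    fix j l assume j: "j \<in> {..<N}" and l: "l \<in> {..<N}"
    have "0 \<le> a i j * a k l" using a0 i k j l by simp
    then show "norm ((a i j * a k l) *\<^sub>R (y j - y l)) \<le> a i j * a k l * R"
      using R[of j l] j l by (simp add: mult_left_mono)
  qed
  also have "\<dots> = R"
    by (simp add: sum_distrib_right[symmetric] sum_distrib_left[symmetric] a1 i k)
  finally show ?thesis .
qed

lemma conv_coord:
  fixes y :: "nat \<Rightarrow> 'a::real_inner"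
  assumes a0: "\<And>j. j<N \<Longrightarrow> a j \<ge> 0"
    and a1: "(\<Sum>j<N. a j) = 1"
    and mM: "\<And>j. j<N \<Longrightarrow> m \<le> y j \<bullet> b \<and> y j \<bullet> b \<le> M"
    and j0: "j0 < N" "y j0 \<bullet> b = m" and eta: "\<eta> \<le> a j0"
  shows "m \<le> (\<Sum>j<N. a j *\<^sub>R y j) \<bullet> b \<and> (\<Sum>j<N. a j *\<^sub>R y j) \<bullet> b \<le> M - \<eta> * (M - m)"
proof -
  have eq: "(\<Sum>j<N. a j *\<^sub>R y j) \<bullet> b = (\<Sum>j<N. a j * (y j \<bullet> b))"
    by (simp add: inner_sum_left)
  have "(\<Sum>j<N. a j * m) \<le> (\<Sum>j<N. a j * (y j \<bullet> b))"
    by (rule sum_mono) (simp add: a0 mM mult_left_mono)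
  hence lo: "m \<le> (\<Sum>j<N. a j * (y j \<bullet> b))" by (simp add: sum_distrib_right[symmetric] a1)
  have mle: "m \<le> M" using mM[OF j0(1)] by simp
  have "a j0 * (M - y j0 \<bullet> b) \<le> (\<Sum>j<N. a j * (M - y j \<bullet> b))"
    by (rule member_le_sum[where f="\<lambda>j. a j * (M - y j \<bullet> b)"]) (use j0 a0 mM in auto)
  moreover have "(\<Sum>j<N. a j * (M - y j \<bullet> b)) = M - (\<Sum>j<N. a j * (y j \<bullet> b))"
    by (simp add: right_diff_distrib sum_subtractf sum_distrib_right[symmetric] a1)
  moreover have "\<eta> * (M - m) \<le> a j0 * (M - m)" using eta mle by (simp add: mult_right_mono)
  ultimately have "(\<Sum>j<N. a j * (y j \<bullet> b)) \<le> M - \<eta> * (M - m)" using j0 by simp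
  with lo eq show ?thesis by simp
qed

theorem corollary1:
  fixes x :: "nat \<Rightarrow> 'a::euclidean_space" and w :: "nat \<Rightarrow> real"
    and f :: "'a \<Rightarrow> real" and \<phi> :: "real \<Rightarrow> real" and N :: nat
  assumes "\<forall>j<N. w j > 0"
    and "PDD f \<phi>"
    and "\<phi> (Max {norm (x i - x j) | i j. i < N \<and> j < N}) > 0"
  shows "\<exists>c. \<forall>i<N. (\<lambda>t. bms f w N x t i) \<longlonglongrightarrow> c"
proof (cases "N = 0")
  case True then show ?thesis by simp
next
  case False
  hence N: "0 < N" by simp
  have wpos: "\<And>j. j<N \<Longrightarrow> w j > 0" using assms(1) by simp
  define rM where "rM = Max {norm (x i - x j) | i j. i < N \<and> j < N}"
  have dpos: "\<phi> rM > 0" using assms(3) rM_def by simp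
  have pdd: "(\<forall>u. f u = \<phi> (norm u))" "(\<forall>u. f u = 1 \<longleftrightarrow> u = 0)"
     "(\<forall>r\<ge>0. 0 \<le> \<phi> r \<and> \<phi> r \<le> 1)" "(\<forall>a b. 0 \<le> a \<longrightarrow> a \<le> b \<longrightarrow> \<phi> b \<le> \<phi> a)"
    using assms(2) unfolding PDD_def by blast+
  have fnn: "\<And>u. 0 \<le> f u" and fle: "\<And>u. f u \<le> 1" using pdd(1,3) by auto
  have f0: "f 0 = 1" using pdd(2) by simp
  have fin: "finite {norm (x i - x j) | i j. i < N \<and> j < N}"
  proof -
    have "{norm (x i - x j) | i j. i < N \<and> j < N} = (\<lambda>(i,j). norm (x i - x j)) ` ({..<N} \<times> {..<N})"
      by auto
    thus ?thesis by simp
  qed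
  have rMge: "\<And>i j. i<N \<Longrightarrow> j<N \<Longrightarrow> norm (x i - x j) \<le> rM"
    unfolding rM_def by (rule Max_ge[OF fin]) blast
  have rM0: "0 \<le> rM" using rMge[OF N N] by (rule order_trans[rotated]) simp
  have fge: "\<And>u. norm u \<le> rM \<Longrightarrow> \<phi> rM \<le> f u" using pdd(1,4) by simp
  have dle1: "\<phi> rM \<le> 1" using pdd(3) rM0 by simp
  define X where "X = bms f w N x"
  define S where "S t i = (\<Sum>l<N. f (X t i - X t l) * w l)" for t i
  define A where "A t i j = f (X t i - X t j) * w j / S t i" for t i j
  have Spos: "S t i > 0" if i: "i<N" for t i
  proof -
    have "f (X t i - X t i) * w i \<le> S t i" unfolding S_def
      by (rule member_le_sum[where f="\<lambda>l. f (X t i - X t l) * w l"])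
         (use i wpos fnn in \<open>auto intro: mult_nonneg_nonneg less_imp_le\<close>)
    thus ?thesis using f0 wpos[OF i] by simp
  qed
  have step: "X (Suc t) i = (\<Sum>j<N. A t i j *\<^sub>R X t j)" for t i
  proof -
    have "X (Suc t) i = (\<Sum>j<N. (f (X t i - X t j) * w j) *\<^sub>R X t j) /\<^sub>R S t i"
      by (simp add: X_def S_def)
    then show ?thesis by (simp add: A_def scaleR_sum_right divide_inverse mult.commute)
  qed
  have A0: "\<And>t i j. i<N \<Longrightarrow> j<N \<Longrightarrow> A t i j \<ge> 0"
    unfolding A_def using Spos fnn wpos by (simp add: less_imp_le)
  have A1: "\<And>t i. i<N \<Longrightarrow> (\<Sum>j<N. A t i j) = 1"
    unfolding A_def using Spos by (simp add: sum_divide_distrib[symmetric] S_def[symmetric] less_imp_neq[symmetric])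
  have dist: "\<forall>i<N. \<forall>j<N. norm (X t i - X t j) \<le> rM" for t
  proof (induction t)
    case 0 then show ?case using rMge by (simp add: X_def)
  next
    case (Suc t)
    show ?case unfolding step
      by (intro allI impI conv_dist[where a="A t"]) (use A0 A1 Suc in auto)
  qed
  define wmin where "wmin = Min (w ` {..<N})"
  define W where "W = (\<Sum>l<N. w l)"
  define \<eta> where "\<eta> = \<phi> rM * wmin / W"
  have wmin: "\<And>j. j<N \<Longrightarrow> wmin \<le> w j" unfolding wmin_def by simp
  have wminpos: "wmin > 0" unfolding wmin_def using N wpos by (subst Min_gr_iff) auto
  have Wge: "w 0 \<le> W" unfolding W_def
    by (rule member_le_sum[where f=w]) (use N wpos in \<open>auto intro: less_imp_le\<close>)
  have Wpos: "W > 0" using Wge wpos[OF N] by simp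
  have etapos: "\<eta> > 0" unfolding \<eta>_def using dpos wminpos Wpos by simp
  have eta1: "\<eta> \<le> 1"
  proof -
    have "\<phi> rM * wmin \<le> wmin" using dle1 wminpos by simp
    also have "\<dots> \<le> W" using wmin[OF N] Wge by simp
    finally show ?thesis unfolding \<eta>_def using Wpos by simp
  qed
  have Aeta: "\<eta> \<le> A t i j" if i: "i<N" and j: "j<N" for t i j
  proof -
    have c: "\<phi> rM * wmin \<le> f (X t i - X t j) * w j"
      by (rule mult_mono) (use fge dist i j wmin wminpos fnn in \<open>auto simp: less_imp_le\<close>)
    have SW: "S t i \<le> W" unfolding S_def W_def
      by (rule sum_mono) (use fle wpos in \<open>auto intro: mult_left_le_one_le less_imp_le\<close>)
    have "\<eta> \<le> \<phi> rM * wmin / S t i" unfolding \<eta>_def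
      by (rule divide_left_mono) (use SW Spos[OF i] dpos wminpos Wpos in auto)
    also have "\<dots> \<le> A t i j" unfolding A_def
      by (rule divide_right_mono) (use c Spos[OF i] in \<open>auto intro: less_imp_le\<close>)
    finally show ?thesis .
  qed
  have coord: "\<exists>L. \<forall>i<N. (\<lambda>t. X t i \<bullet> b) \<longlonglongrightarrow> L" for b :: 'a
  proof -
    define Mx where "Mx t = Max ((\<lambda>j. X t j \<bullet> b) ` {..<N})" for t
    define mn where "mn t = Min ((\<lambda>j. X t j \<bullet> b) ` {..<N})" for t
    have bnd: "\<And>t j. j<N \<Longrightarrow> mn t \<le> X t j \<bullet> b \<and> X t j \<bullet> b \<le> Mx t"
      unfolding Mx_def mn_def by simp
    have ex0: "\<exists>j0<N. X t j0 \<bullet> b = mn t" for t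
    proof -
      have "mn t \<in> (\<lambda>j. X t j \<bullet> b) ` {..<N}" unfolding mn_def using N
        by (intro Min_in) auto
      thus ?thesis by auto
    qed
    have one: "\<And>i. i<N \<Longrightarrow> mn t \<le> X (Suc t) i \<bullet> b \<and> X (Suc t) i \<bullet> b \<le> Mx t - \<eta> * (Mx t - mn t)" for t
    proof -
      fix i assume i: "i<N"
      obtain j0 where j0: "j0<N" "X t j0 \<bullet> b = mn t" using ex0 by blast
      show "mn t \<le> X (Suc t) i \<bullet> b \<and> X (Suc t) i \<bullet> b \<le> Mx t - \<eta> * (Mx t - mn t)"
        unfolding step
        by (rule conv_coord[where a="A t i"]) (use A0 A1 bnd i j0 Aeta in auto)
    qed
    have Mxs: "Mx (Suc t) \<le> Mx t - \<eta> * (Mx t - mn t)" for t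
      unfolding Mx_def[of "Suc t"] using N one by (subst Max_le_iff) auto
    have mns: "mn t \<le> mn (Suc t)" for t
      unfolding mn_def[of "Suc t"] using N one by (subst Min_ge_iff) auto
    have gap0: "0 \<le> Mx t - mn t" for t using bnd[OF N, of t] by simp
    have Mxdec: "Mx (Suc t) \<le> Mx t" for t
      using Mxs[of t] gap0[of t] etapos by (smt (verit) mult_nonneg_nonneg)
    have gap: "Mx t - mn t \<le> (1 - \<eta>) ^ t * (Mx 0 - mn 0)" for t
    proof (induction t)
      case 0 then show ?case by simp
    next
      case (Suc t)
      have "Mx (Suc t) - mn (Suc t) \<le> (1 - \<eta>) * (Mx t - mn t)"
        using Mxs[of t] mns[of t] by (simp add: algebra_simps)
      also have "\<dots> \<le> (1 - \<eta>) * ((1 - \<eta>) ^ t * (Mx 0 - mn 0))"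
        using Suc eta1 by (intro mult_left_mono) auto
      finally show ?case by simp
    qed
    have pz: "(\<lambda>t. (1 - \<eta>) ^ t * (Mx 0 - mn 0)) \<longlonglongrightarrow> 0"
      using etapos eta1 by (intro tendsto_mult_left_zero LIMSEQ_power_zero) auto
    have gapz: "(\<lambda>t. Mx t - mn t) \<longlonglongrightarrow> 0"
      by (rule tendsto_sandwich[OF _ _ tendsto_const pz]) (use gap0 gap in auto)
    have mninc: "incseq mn" using mns by (simp add: incseq_Suc_iff)
    have Mxdec': "decseq Mx" using Mxdec by (simp add: decseq_Suc_iff)
    have "bdd_below (range Mx)"
    proof (rule bdd_belowI[of _ "mn 0"])
      fix y assume "y \<in> range Mx"
      then obtain t where "y = Mx t" by auto
      thus "mn 0 \<le> y" using gap0[of t] mninc by (smt (verit) incseqD le0)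
    qed
    then have MxL: "Mx \<longlonglongrightarrow> (INF t. Mx t)" using Mxdec' by (rule LIMSEQ_decseq_INF)
    have mnL: "mn \<longlonglongrightarrow> (INF t. Mx t)"
    proof -
      have "(\<lambda>t. Mx t - (Mx t - mn t)) \<longlonglongrightarrow> (INF t. Mx t) - 0"
        by (intro tendsto_diff MxL gapz)
      thus ?thesis by simp
    qed
    show ?thesis
    proof (intro exI allI impI)
      fix i assume i: "i<N"
      show "(\<lambda>t. X t i \<bullet> b) \<longlonglongrightarrow> (INF t. Mx t)"
        by (rule tendsto_sandwich[OF _ _ mnL MxL]) (use bnd i in auto)
    qed
  qed
  then obtain L where L: "\<And>b i. i<N \<Longrightarrow> (\<lambda>t. X t i \<bullet> b) \<longlonglongrightarrow> L b" by metis
  show ?thesis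
  proof (intro exI allI impI)
    fix i assume i: "i<N"
    have "(\<lambda>t. \<Sum>b\<in>Basis. (X t i \<bullet> b) *\<^sub>R b) \<longlonglongrightarrow> (\<Sum>b\<in>Basis. L b *\<^sub>R b)"
      by (intro tendsto_intros L i)
    thus "(\<lambda>t. bms f w N x t i) \<longlonglongrightarrow> (\<Sum>b\<in>Basis. L b *\<^sub>R b)"
      by (simp add: euclidean_representation X_def)
  qed
qed

end
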